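(* Let $d\ge 1$ and let $\mathcal{G}\in\mathbb{R}^{N_1\times\cdots\times N_d\times T}$ be a real tensor of order $d+1$. For each $n\in\{1,\dots,d\}$ let $1\le r_n<N_n$, and let $\Phi_n\in\mathbb{R}^{N_n\times r_n}$ be the matrix whose columns are the $r_n$ leading left singular vectors of the mode-$n$ unfolding $G_{(n)}$, i.e. the left factor of a truncated rank-$r_n$ SVD $G_{(n)}\approx \Phi_n\Sigma_{r_n}^{(n)}(V_{r_n}^{(n)})^\top$. Let $S_n\in\mathbb{R}^{N_n\times r_n}$ be obtained from a column-pivoted QR factorization $\Phi_n^\top[P_1^{(n)}\ P_2^{(n)}]=Q_1^{(n)}[R_{11}^{(n)}\ R_{12}^{(n)}]$ (with $[P_1^{(n)}\ P_2^{(n)}]$ an $N_n\times N_n$ permutation matrix) by setting $S_n:=P_1^{(n)}$, the first $r_n$ columns of the permutation matrix, and assume that $S_n^\top\Phi_n$ is invertible for every $1\le n\le d$. Define the matrices $\Pi_n:=\Phi_n(S_n^\top\Phi_n)^{-1}S_n^\top\in\mathbb{R}^{N_n\times N_n}$. Then $$\bigl\|\mathcal{G}-\mathcal{G}\times_1\Pi_1\times_2\Pi_2\cdots\times_d\Pi_d\bigr\|_F\;\le\;\Bigl(\prod_{n=1}^d\bigl\|(S_n^\top\Phi_n)^{-1}\bigr\|_2\Bigr)\Bigl(\sum_{n=1}^d\sum_{k>r_n}\sigma_k^2\bigl(G_{(n)}\bigr)\Bigr)^{1/2},$$ where $\sigma_k(G_{(n)})$ denotes the $k$-th largest singular value of 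$G_{(n)}$.
   Context: For a tensor $\mathcal{G}$ of order $m$ with entries $g_{i_1,\dots,i_m}$, the mode-$n$ unfolding (matricization) $G_{(n)}$ is the matrix whose rows are indexed by $i_n$ and whose columns are indexed by all remaining indices $(i_j)_{j\neq n}$ (in a fixed ordering). The mode-$n$ product of $\mathcal{G}$ with a matrix $M\in\mathbb{R}^{R\times N_n}$ is the tensor $\mathcal{Y}=\mathcal{G}\times_n M$ with entries $y_{i_1,\dots,j,\dots,i_m}=\sum_{k}g_{i_1,\dots,k,\dots,i_m}m_{jk}$ ($j$ in position $n$), equivalently $Y_{(n)}=MG_{(n)}$; products in distinct modes commute. $\|\mathcal{G}\|_F^2=\sum g_{i_1,\dots,i_m}^2$ is the Frobenius norm and $\|\cdot\|_2$ is the spectral norm of a matrix. Note that only the first $d$ (spatial) modes are multiplied; mode $d+1$ (of size $T$) is left unchanged. *)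

theory Defs
  imports "HOL-Analysis.Analysis"
begin

text \<open>Modes are 0-indexed: the paper's spatial modes 1..d are modes 0..d-1 here,
and the temporal mode d+1 (of size T) is mode d. A tensor of order m with mode sizes
N 0, ..., N (m-1) is a function from multi-indices (nat => nat) to reals; only its values on
tidx N m matter. Matrices are functions nat => nat => real with explicitly given dimensions.\<close>

definition tidx :: "(nat \<Rightarrow> nat) \<Rightarrow> nat \<Rightarrow> (nat \<Rightarrow> nat) set" where
  "tidx N m = PiE {..<m} (\<lambda>k. {..<N k})"

definition frob :: "(nat \<Rightarrow> nat) \<Rightarrow> nat \<Rightarrow> ((nat \<Rightarrow> nat) \<Rightarrow> real) \<Rightarrow> real" where
  "frob N m G = sqrt (\<Sum>i\<in>tidx N m. (G i)\<^sup>2)"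

definition mode_prod :: "(nat \<Rightarrow> nat) \<Rightarrow> nat \<Rightarrow> (nat \<Rightarrow> nat \<Rightarrow> real)
    \<Rightarrow> ((nat \<Rightarrow> nat) \<Rightarrow> real) \<Rightarrow> ((nat \<Rightarrow> nat) \<Rightarrow> real)" where
  "mode_prod N n M G = (\<lambda>i. \<Sum>k<N n. G (i(n := k)) * M (i n) k)"

primrec multi_mode_prod :: "(nat \<Rightarrow> nat) \<Rightarrow> (nat \<Rightarrow> nat \<Rightarrow> nat \<Rightarrow> real) \<Rightarrow> nat
    \<Rightarrow> ((nat \<Rightarrow> nat) \<Rightarrow> real) \<Rightarrow> ((nat \<Rightarrow> nat) \<Rightarrow> real)" where
  "multi_mode_prod N M 0 G = G"
| "multi_mode_prod N M (Suc n) G = mode_prod N n (M n) (multi_mode_prod N M n G)"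

text \<open>Mode-n mode_unfold of an order-m tensor: rows indexed by i_n < N n, columns indexed
by the tuples of all remaining indices (the set unfold_cols N m n).\<close>
definition unfold_cols :: "(nat \<Rightarrow> nat) \<Rightarrow> nat \<Rightarrow> nat \<Rightarrow> (nat \<Rightarrow> nat) set" where
  "unfold_cols N m n = PiE ({..<m} - {n}) (\<lambda>k. {..<N k})"

definition mode_unfold :: "((nat \<Rightarrow> nat) \<Rightarrow> real) \<Rightarrow> nat \<Rightarrow> nat \<Rightarrow> (nat \<Rightarrow> nat) \<Rightarrow> real" where
  "mode_unfold G n = (\<lambda>a j. G (j(n := a)))"

definition is_svd :: "nat \<Rightarrow> 'j set \<Rightarrow> (nat \<Rightarrow> 'j \<Rightarrow> real) \<Rightarrow> (nat \<Rightarrow> nat \<Rightarrow> real)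
    \<Rightarrow> (nat \<Rightarrow> real) \<Rightarrow> bool" where
  "is_svd Nr J A U s \<longleftrightarrow>
     (\<forall>i<Nr. \<forall>i'<Nr. (\<Sum>k<Nr. U i k * U i' k) = (if i = i' then 1 else 0)) \<and>
     (\<forall>k<Nr. \<forall>k'<Nr. (\<Sum>i<Nr. U i k * U i k') = (if k = k' then 1 else 0)) \<and>
     (\<forall>k<Nr. 0 \<le> s k) \<and> (\<forall>k l. k \<le> l \<longrightarrow> l < Nr \<longrightarrow> s l \<le> s k) \<and>
     (\<exists>V :: nat \<Rightarrow> 'j \<Rightarrow> real.
        (\<forall>k<Nr. \<forall>l<Nr. 0 < s k \<longrightarrow> 0 < s l \<longrightarrow>
            (\<Sum>j\<in>J. V k j * V l j) = (if k = l then 1 else 0)) \<and>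
        (\<forall>i<Nr. \<forall>j\<in>J. A i j = (\<Sum>k<Nr. U i k * s k * V k j)))"

definition spec_norm :: "nat \<Rightarrow> nat \<Rightarrow> (nat \<Rightarrow> nat \<Rightarrow> real) \<Rightarrow> real" where
  "spec_norm m n A = Sup {sqrt (\<Sum>i<m. (\<Sum>j<n. A i j * x j)\<^sup>2) | x. (\<Sum>j<n. (x j)\<^sup>2) \<le> 1}"

text \<open>Oblique projection Pi = Phi (S^T Phi)^{-1} S^T, given Minv = (S^T Phi)^{-1} (r x r).\<close>
definition oblique_proj :: "nat \<Rightarrow> (nat \<Rightarrow> nat \<Rightarrow> real) \<Rightarrow> (nat \<Rightarrow> nat \<Rightarrow> real)
    \<Rightarrow> (nat \<Rightarrow> nat \<Rightarrow> real) \<Rightarrow> nat \<Rightarrow> nat \<Rightarrow> real" where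
  "oblique_proj r Phi Minv S = (\<lambda>a b. \<Sum>k<r. \<Sum>l<r. Phi a k * Minv k l * S b l)"

end

theory Submission
  imports Defs
begin

definition ip :: "(nat \<Rightarrow> nat) \<Rightarrow> nat \<Rightarrow> ((nat \<Rightarrow> nat) \<Rightarrow> real) \<Rightarrow> ((nat \<Rightarrow> nat) \<Rightarrow> real) \<Rightarrow> real" where
  "ip N m X Y = (\<Sum>i\<in>tidx N m. X i * Y i)"

lemma tidx_upd: "i \<in> tidx N m \<Longrightarrow> n < m \<Longrightarrow> k < N n \<Longrightarrow> i(n := k) \<in> tidx N m"
  unfolding tidx_def by (auto simp: PiE_iff extensional_def)

lemma tidx_lt: "i \<in> tidx N m \<Longrightarrow> n < m \<Longrightarrow> i n < N n"
  unfolding tidx_def by (auto simp: PiE_iff)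

lemma finite_tidx: "finite (tidx N m)"
  unfolding tidx_def by (auto intro: finite_PiE)

lemma swap_sum:
  assumes "n < m"
  shows "(\<Sum>i\<in>tidx N m. \<Sum>k<N n. F (i(n:=k)) (i n) k) = (\<Sum>i\<in>tidx N m. \<Sum>k<N n. F i k (i n))"
proof -
  have "(\<Sum>i\<in>tidx N m. \<Sum>k<N n. F (i(n:=k)) (i n) k) = (\<Sum>(i,k)\<in>tidx N m \<times> {..<N n}. F (i(n:=k)) (i n) k)"
    by (simp add: sum.cartesian_product)
  also have "\<dots> = (\<Sum>(i,k)\<in>tidx N m \<times> {..<N n}. F i k (i n))"
    by (rule sum.reindex_bij_witness[where i="\<lambda>(i,k). (i(n:=k), i n)" and j="\<lambda>(i,k). (i(n:=k), i n)"])
       (auto simp: assms tidx_upd tidx_lt)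
  also have "\<dots> = (\<Sum>i\<in>tidx N m. \<Sum>k<N n. F i k (i n))"
    by (simp add: sum.cartesian_product)
  finally show ?thesis .
qed

lemma ip_mode_adj:
  assumes "n < m"
  shows "ip N m (mode_prod N n M X) Y = ip N m X (mode_prod N n (\<lambda>a b. M b a) Y)"
proof -
  have "ip N m (mode_prod N n M X) Y = (\<Sum>i\<in>tidx N m. \<Sum>k<N n. (\<lambda>x a b. X x * Y (x(n:=a)) * M a b) (i(n:=k)) (i n) k)"
    by (simp add: ip_def mode_prod_def sum_distrib_left sum_distrib_right mult_ac)
  also have "\<dots> = (\<Sum>i\<in>tidx N m. \<Sum>k<N n. (\<lambda>x a b. X x * Y (x(n:=a)) * M a b) i k (i n))"
    by (rule swap_sum[OF assms])
  also have "\<dots> = ip N m X (mode_prod N n (\<lambda>a b. M b a) Y)"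
    by (simp add: ip_def mode_prod_def sum_distrib_left mult_ac)
  finally show ?thesis .
qed

lemma mode_lin: "mode_prod N n M (\<lambda>i. a * X i + b * Y i) = (\<lambda>i. a * mode_prod N n M X i + b * mode_prod N n M Y i)"
  by (simp add: mode_prod_def sum.distrib sum_distrib_left algebra_simps)

lemma multi_lin: "multi_mode_prod N A k (\<lambda>i. a * X i + b * Y i) = (\<lambda>i. a * multi_mode_prod N A k X i + b * multi_mode_prod N A k Y i)"
  by (induction k) (simp_all add: mode_lin)

lemma mode_comp: "mode_prod N n A (mode_prod N n B X) = mode_prod N n (\<lambda>a c. \<Sum>b<N n. A a b * B b c) X"
  by (auto simp: mode_prod_def sum_distrib_left sum_distrib_right mult_ac intro!: ext sum.swap[THEN trans])

lemma mode_comm: "n \<noteq> n' \<Longrightarrow> mode_prod N n A (mode_prod N n' B X) = mode_prod N n' B (mode_prod N n A X)"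
  by (auto simp: mode_prod_def sum_distrib_left sum_distrib_right mult_ac fun_upd_twist intro!: ext sum.swap[THEN trans])

lemma multi_comm: "d \<le> n \<Longrightarrow> mode_prod N n A (multi_mode_prod N M d X) = multi_mode_prod N M d (mode_prod N n A X)"
  by (induction d) (simp_all add: mode_comm)

lemma multi_comp: "multi_mode_prod N A d (multi_mode_prod N B d X) = multi_mode_prod N (\<lambda>n a c. \<Sum>b<N n. A n a b * B n b c) d X"
proof (induction d)
  case 0 then show ?case by simp
next
  case (Suc d)
  have "multi_mode_prod N A (Suc d) (multi_mode_prod N B (Suc d) X)
      = mode_prod N d (A d) (multi_mode_prod N A d (mode_prod N d (B d) (multi_mode_prod N B d X)))" by simp
  also have "\<dots> = mode_prod N d (A d) (mode_prod N d (B d) (multi_mode_prod N A d (multi_mode_prod N B d X)))"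
    by (simp add: multi_comm)
  also have "\<dots> = multi_mode_prod N (\<lambda>n a c. \<Sum>b<N n. A n a b * B n b c) (Suc d) X"
    by (simp add: mode_comp Suc.IH)
  finally show ?case .
qed

lemma multi_cong:
  assumes "d \<le> m" "\<forall>i\<in>tidx N m. X i = X' i" "\<forall>n<d. \<forall>a<N n. \<forall>b<N n. A n a b = A' n a b"
  shows "\<forall>i\<in>tidx N m. multi_mode_prod N A d X i = multi_mode_prod N A' d X' i"
  using assms
proof (induction d)
  case 0 then show ?case by simp
next
  case (Suc d)
  have IH: "\<forall>i\<in>tidx N m. multi_mode_prod N A d X i = multi_mode_prod N A' d X' i"
    using Suc by auto
  show ?case
  proof
    fix i assume i: "i \<in> tidx N m"
    have "d < m" using Suc by auto
    then show "multi_mode_prod N A (Suc d) X i = multi_mode_prod N A' (Suc d) X' i"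
      using IH i Suc.prems(3) by (auto simp: mode_prod_def tidx_upd tidx_lt intro!: sum.cong)
  qed
qed

lemma multi_adj:
  assumes "d \<le> m" "\<And>n a b. A n a b = A n b a"
  shows "ip N m (multi_mode_prod N A d X) Y = ip N m X (multi_mode_prod N A d Y)"
  using assms(1)
proof (induction d arbitrary: Y)
  case 0 then show ?case by simp
next
  case (Suc d)
  have T: "(\<lambda>a b. A d b a) = A d" using assms(2) by (auto intro!: ext)
  have "ip N m (multi_mode_prod N A (Suc d) X) Y = ip N m (multi_mode_prod N A d X) (mode_prod N d (A d) Y)"
    using Suc.prems by (simp add: ip_mode_adj T)
  also have "\<dots> = ip N m X (multi_mode_prod N A d (mode_prod N d (A d) Y))"
    using Suc by simp
  also have "\<dots> = ip N m X (multi_mode_prod N A (Suc d) Y)"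
    by (simp add: multi_comm)
  finally show ?case .
qed

lemma ip_sym: "ip N m X Y = ip N m Y X"
  by (simp add: ip_def mult.commute)

lemma ip_lin: "ip N m (\<lambda>i. a * X i + b * Y i) Z = a * ip N m X Z + b * ip N m Y Z"
  by (simp add: ip_def sum.distrib sum_distrib_left algebra_simps)

lemma ip_cong: "\<forall>i\<in>tidx N m. X i = X' i \<Longrightarrow> \<forall>i\<in>tidx N m. Y i = Y' i \<Longrightarrow> ip N m X Y = ip N m X' Y'"
  by (simp add: ip_def)

lemma ip_nonneg: "0 \<le> ip N m X X"
  by (simp add: ip_def sum_nonneg)

lemma ip_zero: "\<forall>i\<in>tidx N m. X i = 0 \<Longrightarrow> ip N m X Y = 0"
  by (simp add: ip_def)

lemma nrm_diff: "ip N m (\<lambda>i. X i - Y i) (\<lambda>i. X i - Y i) = ip N m X X - 2 * ip N m X Y + ip N m Y Y"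
  by (simp add: ip_def sum_subtractf sum.distrib sum_distrib_left algebra_simps power2_eq_square)

lemma nrm_add: "ip N m (\<lambda>i. X i + Y i) (\<lambda>i. X i + Y i) = ip N m X X + 2 * ip N m X Y + ip N m Y Y"
  by (simp add: ip_def sum.distrib sum_distrib_left algebra_simps power2_eq_square)

lemma mode_bound:
  assumes "n < m" "0 < N n"
    and B: "\<And>x. (\<Sum>a<N n. (\<Sum>k<N n. M a k * x k)\<^sup>2) \<le> c * (\<Sum>k<N n. (x k)\<^sup>2)"
  shows "ip N m (mode_prod N n M X) (mode_prod N n M X) \<le> c * ip N m X X"
proof -
  define f where "f i = (mode_prod N n M X i)\<^sup>2" for i
  have sw: "(\<Sum>i\<in>tidx N m. \<Sum>k<N n. g (i(n:=k))) = real (N n) * (\<Sum>i\<in>tidx N m. g i)" for g :: "_ \<Rightarrow> real"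
    using swap_sum[OF assms(1), where F="\<lambda>x a b. g x" and N=N] by (simp add: sum_distrib_left)
  have "real (N n) * ip N m (mode_prod N n M X) (mode_prod N n M X) = (\<Sum>i\<in>tidx N m. \<Sum>k<N n. f (i(n:=k)))"
    by (subst sw) (simp add: f_def ip_def power2_eq_square)
  also have "\<dots> = (\<Sum>i\<in>tidx N m. \<Sum>a<N n. (\<Sum>k<N n. M a k * X (i(n:=k)))\<^sup>2)"
    by (simp add: f_def mode_prod_def mult.commute)
  also have "\<dots> \<le> (\<Sum>i\<in>tidx N m. c * (\<Sum>k<N n. (X (i(n:=k)))\<^sup>2))"
    by (rule sum_mono) (rule B)
  also have "\<dots> = c * (real (N n) * ip N m X X)"
    by (subst sum_distrib_left[symmetric], subst sw) (simp add: ip_def power2_eq_square)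
  finally have "real (N n) * ip N m (mode_prod N n M X) (mode_prod N n M X) \<le> real (N n) * (c * ip N m X X)"
    by (simp add: mult_ac)
  then show ?thesis using assms(2) by simp
qed

lemma multi_bound:
  assumes "d \<le> m" "\<forall>n<d. 0 < N n" "\<forall>n<d. 0 \<le> c n"
    and B: "\<And>n x. n < d \<Longrightarrow> (\<Sum>a<N n. (\<Sum>k<N n. A n a k * x k)\<^sup>2) \<le> c n * (\<Sum>k<N n. (x k)\<^sup>2)"
  shows "ip N m (multi_mode_prod N A d X) (multi_mode_prod N A d X) \<le> (\<Prod>n<d. c n) * ip N m X X"
  using assms
proof (induction d)
  case 0 then show ?case by simp
next
  case (Suc d)
  have IH: "ip N m (multi_mode_prod N A d X) (multi_mode_prod N A d X) \<le> (\<Prod>n<d. c n) * ip N m X X"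
    using Suc by auto
  have "ip N m (multi_mode_prod N A (Suc d) X) (multi_mode_prod N A (Suc d) X)
      \<le> c d * ip N m (multi_mode_prod N A d X) (multi_mode_prod N A d X)"
    using Suc.prems by (simp add: mode_bound)
  also have "\<dots> \<le> c d * ((\<Prod>n<d. c n) * ip N m X X)"
    using IH Suc.prems by (simp add: mult_left_mono)
  finally show ?case by (simp add: mult_ac)
qed

lemma proj_idem:
  assumes "k \<le> m" "\<forall>n<k. \<forall>a<N n. \<forall>c<N n. (\<Sum>b<N n. A n a b * A n b c) = A n a c"
  shows "\<forall>i\<in>tidx N m. multi_mode_prod N A k (multi_mode_prod N A k X) i = multi_mode_prod N A k X i"
  unfolding multi_comp using multi_cong[OF assms(1), of N X X] assms(2) by auto

lemma proj_orth:
  assumes "k \<le> m" "\<forall>n<k. \<forall>a<N n. \<forall>c<N n. (\<Sum>b<N n. A n a b * A n b c) = A n a c"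
    "\<And>n a b. A n a b = A n b a"
  shows "ip N m (\<lambda>i. X i - multi_mode_prod N A k X i) (multi_mode_prod N A k Z) = 0"
proof -
  have "ip N m (\<lambda>i. X i - multi_mode_prod N A k X i) (multi_mode_prod N A k Z)
     = ip N m (multi_mode_prod N A k (\<lambda>i. 1 * X i + (-1) * multi_mode_prod N A k X i)) Z"
    by (simp add: multi_adj[OF assms(1) assms(3)])
  also have "\<dots> = 0"
    using proj_idem[OF assms(1,2), of X] by (simp only: multi_lin) (rule ip_zero, simp)
  finally show ?thesis .
qed

lemma proj_contract:
  assumes "k \<le> m" "\<forall>n<k. \<forall>a<N n. \<forall>c<N n. (\<Sum>b<N n. A n a b * A n b c) = A n a c"
    "\<And>n a b. A n a b = A n b a"
  shows "ip N m (multi_mode_prod N A k Z) (multi_mode_prod N A k Z) \<le> ip N m Z Z"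
proof -
  let ?Q = "multi_mode_prod N A k Z"
  have e: "Z = (\<lambda>i. ?Q i + (Z i - ?Q i))" by simp
  have o: "ip N m ?Q (\<lambda>i. Z i - ?Q i) = 0"
    using proj_orth[OF assms, of Z Z] by (simp add: ip_sym)
  have "ip N m Z Z = ip N m ?Q ?Q + 2 * ip N m ?Q (\<lambda>i. Z i - ?Q i) + ip N m (\<lambda>i. Z i - ?Q i) (\<lambda>i. Z i - ?Q i)"
    by (subst e, subst e, rule nrm_add)
  then show ?thesis using o ip_nonneg[of N m "\<lambda>i. Z i - ?Q i"] by linarith
qed

lemma orth_norm:
  fixes F :: "nat \<Rightarrow> nat \<Rightarrow> real"
  assumes "\<forall>k<R. \<forall>k'<R. (\<Sum>a<NN. F a k * F a k') = (if k = k' then 1 else 0)"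
  shows "(\<Sum>a<NN. (\<Sum>k<R. F a k * z k)\<^sup>2) = (\<Sum>k<R. (z k)\<^sup>2)"
proof -
  have "(\<Sum>a<NN. (\<Sum>k<R. F a k * z k)\<^sup>2) = (\<Sum>a<NN. \<Sum>k<R. \<Sum>k'<R. z k * z k' * (F a k * F a k'))"
    by (simp add: power2_eq_square sum_product mult_ac)
  also have "\<dots> = (\<Sum>k<R. \<Sum>a<NN. \<Sum>k'<R. z k * z k' * (F a k * F a k'))"
    by (rule sum.swap)
  also have "\<dots> = (\<Sum>k<R. \<Sum>k'<R. z k * z k' * (\<Sum>a<NN. F a k * F a k'))"
    by (simp add: sum_distrib_left sum.swap[of _ "{..<NN}"])
  also have "\<dots> = (\<Sum>k<R. \<Sum>k'<R. z k * z k' * (if k = k' then 1 else 0))"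
    using assms by (auto intro!: sum.cong)
  also have "\<dots> = (\<Sum>k<R. \<Sum>k'<R. if k = k' then z k * z k' else 0)"
    by (intro sum.cong) auto
  also have "\<dots> = (\<Sum>k<R. (z k)\<^sup>2)"
    by (simp add: power2_eq_square)
  finally show ?thesis .
qed

lemma spec_bdd: fixes mm nn :: nat and M :: "nat \<Rightarrow> nat \<Rightarrow> real" shows "bdd_above {sqrt (\<Sum>i<mm. (\<Sum>j<nn. M i j * x j)\<^sup>2) | x. (\<Sum>j<nn. (x j)\<^sup>2) \<le> 1}"
proof (rule bdd_aboveI, clarify)
  fix x :: "nat \<Rightarrow> real" assume x: "(\<Sum>j<nn. (x j)\<^sup>2) \<le> 1"
  have "(\<Sum>i<mm. (\<Sum>j<nn. M i j * x j)\<^sup>2) \<le> (\<Sum>i<mm. (\<Sum>j<nn. (M i j)\<^sup>2))"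
  proof (rule sum_mono)
    fix i
    have "(\<Sum>j<nn. M i j * x j)\<^sup>2 \<le> (\<Sum>j<nn. (M i j)\<^sup>2) * (\<Sum>j<nn. (x j)\<^sup>2)"
      by (rule Cauchy_Schwarz_ineq_sum)
    also have "\<dots> \<le> (\<Sum>j<nn. (M i j)\<^sup>2) * 1"
      by (rule mult_left_mono[OF x]) (simp add: sum_nonneg)
    finally show "(\<Sum>j<nn. M i j * x j)\<^sup>2 \<le> (\<Sum>j<nn. (M i j)\<^sup>2)" by simp
  qed
  then show "sqrt (\<Sum>i<mm. (\<Sum>j<nn. M i j * x j)\<^sup>2) \<le> sqrt (\<Sum>i<mm. \<Sum>j<nn. (M i j)\<^sup>2)"
    by simp
qed

lemma spec_nonneg: "0 \<le> spec_norm mm nn M"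
proof -
  have "sqrt (\<Sum>i<mm. (\<Sum>j<nn. M i j * (\<lambda>_. 0) j)\<^sup>2) \<in> {sqrt (\<Sum>i<mm. (\<Sum>j<nn. M i j * x j)\<^sup>2) | x. (\<Sum>j<nn. (x j)\<^sup>2) \<le> 1}"
    by (rule CollectI, rule exI[where x="\<lambda>_. 0"]) simp
  then have "sqrt (\<Sum>i<mm. (\<Sum>j<nn. M i j * (\<lambda>_. 0) j)\<^sup>2) \<le> spec_norm mm nn M"
    unfolding spec_norm_def by (rule cSup_upper[OF _ spec_bdd])
  then show ?thesis by simp
qed

lemma spec_bound:
  "(\<Sum>i<mm. (\<Sum>j<nn. M i j * x j)\<^sup>2) \<le> (spec_norm mm nn M)\<^sup>2 * (\<Sum>j<nn. (x j)\<^sup>2)"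
proof (cases "(\<Sum>j<nn. (x j)\<^sup>2) = 0")
  case True
  then have "\<forall>j<nn. x j = 0" by (simp add: sum_nonneg_eq_0_iff)
  then show ?thesis by (simp add: True)
next
  case False
  define t where "t = sqrt (\<Sum>j<nn. (x j)\<^sup>2)"
  have t0: "0 < t" using False by (simp add: t_def sum_nonneg order_neq_le_trans[OF _ sum_nonneg] )
  define y where "y j = x j / t" for j
  have "(\<Sum>j<nn. (y j)\<^sup>2) = (\<Sum>j<nn. (x j)\<^sup>2) / t\<^sup>2"
    by (simp add: y_def power_divide sum_divide_distrib)
  also have "\<dots> = 1" using t0 False by (simp add: t_def sum_nonneg)
  finally have y1: "(\<Sum>j<nn. (y j)\<^sup>2) \<le> 1" by simp
  have "sqrt (\<Sum>i<mm. (\<Sum>j<nn. M i j * y j)\<^sup>2) \<le> spec_norm mm nn M"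
    unfolding spec_norm_def by (rule cSup_upper[OF _ spec_bdd]) (use y1 in blast)
  moreover have "(\<Sum>i<mm. (\<Sum>j<nn. M i j * y j)\<^sup>2) = (\<Sum>i<mm. (\<Sum>j<nn. M i j * x j)\<^sup>2) / t\<^sup>2"
    by (simp add: y_def sum_divide_distrib[symmetric] power_divide)
  ultimately have "sqrt ((\<Sum>i<mm. (\<Sum>j<nn. M i j * x j)\<^sup>2) / t\<^sup>2) \<le> spec_norm mm nn M" by simp
  then have "sqrt (\<Sum>i<mm. (\<Sum>j<nn. M i j * x j)\<^sup>2) / t \<le> spec_norm mm nn M"
    using t0 by (simp add: real_sqrt_divide)
  then have "sqrt (\<Sum>i<mm. (\<Sum>j<nn. M i j * x j)\<^sup>2) \<le> spec_norm mm nn M * t"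
    using t0 by (simp add: divide_le_eq)
  then have "(sqrt (\<Sum>i<mm. (\<Sum>j<nn. M i j * x j)\<^sup>2))\<^sup>2 \<le> (spec_norm mm nn M * t)\<^sup>2"
    by (rule power_mono) (simp add: sum_nonneg)
  moreover have "0 \<le> (\<Sum>i<mm. (\<Sum>j<nn. M i j * x j)\<^sup>2)" by (rule sum_nonneg) simp
  moreover have "0 \<le> (\<Sum>j<nn. (x j)\<^sup>2)" by (rule sum_nonneg) simp
  ultimately show ?thesis by (simp only: real_sqrt_pow2 power_mult_distrib t_def)
qed

locale mctx =
  fixes NN R :: nat and U Phi S Minv :: "nat \<Rightarrow> nat \<Rightarrow> real" and p :: "nat \<Rightarrow> nat"
  assumes R1: "1 \<le> R" and RN: "R < NN"
    and Uorth: "\<forall>k<NN. \<forall>k'<NN. (\<Sum>i<NN. U i k * U i k') = (if k = k' then 1 else 0)"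
    and PhiU: "\<forall>i<NN. \<forall>k<R. Phi i k = U i k"
    and perm: "bij_betw p {..<NN} {..<NN}"
    and Sdef: "\<forall>i<NN. \<forall>k<R. S i k = (if i = p k then 1 else 0)"
    and Minv_left: "\<forall>k<R. \<forall>l<R. (\<Sum>m<R. Minv k m * (\<Sum>i<NN. S i m * Phi i l)) = (if k = l then 1 else 0)"
begin

definition "Pob = oblique_proj R Phi Minv S"
definition "Pm a b = (\<Sum>k<R. Phi a k * Phi b k)"

lemma pl: "l < R \<Longrightarrow> p l < NN"
  using perm RN unfolding bij_betw_def by auto

lemma Phi_orth: "\<forall>k<R. \<forall>k'<R. (\<Sum>a<NN. Phi a k * Phi a k') = (if k = k' then 1 else 0)"
  using Uorth PhiU RN by auto

lemma S_sum: "l < R \<Longrightarrow> (\<Sum>i<NN. S i l * f i) = f (p l)"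
proof -
  assume l: "l < R"
  have "(\<Sum>i<NN. S i l * f i) = (\<Sum>i<NN. if i = p l then f i else 0)"
    using Sdef l by (intro sum.cong) auto
  also have "\<dots> = f (p l)" using pl[OF l] by simp
  finally show ?thesis .
qed

lemma Minv_left': "k < R \<Longrightarrow> k' < R \<Longrightarrow> (\<Sum>l<R. Minv k l * Phi (p l) k') = (if k = k' then 1 else 0)"
  using Minv_left S_sum by simp

lemma sub_sum: fixes f :: "nat \<Rightarrow> real" shows "(\<And>b. 0 \<le> f b) \<Longrightarrow> (\<Sum>l<R. f (p l)) \<le> (\<Sum>b<NN. f b)"
proof -
  assume f: "\<And>b. 0 \<le> f b"
  have inj: "inj_on p {..<R}"
    using perm RN unfolding bij_betw_def by (auto intro: inj_on_subset)
  have "(\<Sum>l<R. f (p l)) = (\<Sum>b\<in>p ` {..<R}. f b)"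
    by (simp add: sum.reindex[OF inj])
  also have "\<dots> \<le> (\<Sum>b<NN. f b)"
    by (rule sum_mono2) (use pl f in auto)
  finally show ?thesis .
qed

lemma Pob_apply: "(\<Sum>b<NN. Pob a b * x b) = (\<Sum>k<R. Phi a k * (\<Sum>l<R. Minv k l * x (p l)))"
proof -
  have "(\<Sum>b<NN. Pob a b * x b) = (\<Sum>b<NN. \<Sum>k<R. \<Sum>l<R. Phi a k * Minv k l * (S b l * x b))"
    by (simp add: Pob_def oblique_proj_def sum_distrib_right sum_distrib_left mult_ac)
  also have "\<dots> = (\<Sum>k<R. \<Sum>b<NN. \<Sum>l<R. Phi a k * Minv k l * (S b l * x b))"
    by (rule sum.swap)
  also have "\<dots> = (\<Sum>k<R. \<Sum>l<R. \<Sum>b<NN. Phi a k * Minv k l * (S b l * x b))"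
    by (rule sum.cong[OF refl], rule sum.swap)
  also have "\<dots> = (\<Sum>k<R. \<Sum>l<R. Phi a k * Minv k l * x (p l))"
    by (intro sum.cong refl) (simp add: sum_distrib_left[symmetric] S_sum)
  also have "\<dots> = (\<Sum>k<R. Phi a k * (\<Sum>l<R. Minv k l * x (p l)))"
    by (simp add: sum_distrib_left mult_ac)
  finally show ?thesis .
qed

lemma Pob_bound: "(\<Sum>a<NN. (\<Sum>b<NN. Pob a b * x b)\<^sup>2) \<le> (spec_norm R R Minv)\<^sup>2 * (\<Sum>b<NN. (x b)\<^sup>2)"
proof -
  have "(\<Sum>a<NN. (\<Sum>b<NN. Pob a b * x b)\<^sup>2) = (\<Sum>a<NN. (\<Sum>k<R. Phi a k * (\<Sum>l<R. Minv k l * x (p l)))\<^sup>2)"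
    by (simp add: Pob_apply)
  also have "\<dots> = (\<Sum>k<R. (\<Sum>l<R. Minv k l * x (p l))\<^sup>2)"
    by (rule orth_norm[OF Phi_orth])
  also have "\<dots> \<le> (spec_norm R R Minv)\<^sup>2 * (\<Sum>l<R. (x (p l))\<^sup>2)"
    by (rule spec_bound)
  also have "\<dots> \<le> (spec_norm R R Minv)\<^sup>2 * (\<Sum>b<NN. (x b)\<^sup>2)"
    by (rule mult_left_mono) (auto intro: sub_sum)
  finally show ?thesis .
qed

lemma eta_ge1: "1 \<le> spec_norm R R Minv"
proof -
  have R0: "0 < R" using R1 by simp
  have "(\<Sum>k<R. (\<Sum>l<R. Minv k l * Phi (p l) 0)\<^sup>2) = (\<Sum>k<R. (if k = 0 then 1 else 0))"
    using R0 by (intro sum.cong refl) (simp add: Minv_left')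
  also have "\<dots> = 1" using R0 by simp
  finally have "1 \<le> (spec_norm R R Minv)\<^sup>2 * (\<Sum>l<R. (Phi (p l) 0)\<^sup>2)"
    using spec_bound[where mm=R and nn=R and M=Minv and x="\<lambda>l. Phi (p l) 0"] by simp
  also have "\<dots> \<le> (spec_norm R R Minv)\<^sup>2 * (\<Sum>b<NN. (Phi b 0)\<^sup>2)"
    by (rule mult_left_mono) (auto intro: sub_sum)
  also have "(\<Sum>b<NN. (Phi b 0)\<^sup>2) = 1"
    using Phi_orth R0 by (simp add: power2_eq_square)
  finally have "1 \<le> (spec_norm R R Minv)\<^sup>2" by simp
  then show ?thesis using spec_nonneg[of R R Minv]
    using real_sqrt_le_mono[OF \<open>1 \<le> (spec_norm R R Minv)\<^sup>2\<close>] by simp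
qed

lemma Pm_sym: "Pm a b = Pm b a"
  by (simp add: Pm_def mult.commute)

lemma Phi_sum: "k < R \<Longrightarrow> (\<Sum>k'<R. (\<Sum>b<NN. Phi b k * Phi b k') * f k') = f k"
proof -
  assume k: "k < R"
  have "(\<Sum>k'<R. (\<Sum>b<NN. Phi b k * Phi b k') * f k') = (\<Sum>k'<R. if k = k' then f k' else 0)"
    using Phi_orth k by (intro sum.cong) auto
  also have "\<dots> = f k" using k by simp
  finally show ?thesis .
qed

lemma Pm_idem: "(\<Sum>b<NN. Pm a b * Pm b c) = Pm a c"
proof -
  have "(\<Sum>b<NN. Pm a b * Pm b c) = (\<Sum>b<NN. \<Sum>k<R. \<Sum>k'<R. Phi a k * (Phi b k * Phi b k' * Phi c k'))"
    by (simp add: Pm_def sum_product mult_ac)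
  also have "\<dots> = (\<Sum>k<R. \<Sum>b<NN. \<Sum>k'<R. Phi a k * (Phi b k * Phi b k' * Phi c k'))"
    by (rule sum.swap)
  also have "\<dots> = (\<Sum>k<R. Phi a k * (\<Sum>k'<R. (\<Sum>b<NN. Phi b k * Phi b k') * Phi c k'))"
    by (rule sum.cong[OF refl], rule trans[OF sum.swap]) (simp add: sum_distrib_left sum_distrib_right mult_ac)
  also have "\<dots> = Pm a c"
    by (auto simp: Phi_sum Pm_def intro!: sum.cong)
  finally show ?thesis .
qed

end

context mctx
begin

lemma PobPm: "(\<Sum>b<NN. Pob a b * Pm b c) = Pm a c"
proof -
  have inner: "(\<Sum>l<R. Minv k l * Pm (p l) c) = Phi c k" if k: "k < R" for k
  proof -
    have "(\<Sum>l<R. Minv k l * Pm (p l) c) = (\<Sum>l<R. \<Sum>k'<R. Minv k l * Phi (p l) k' * Phi c k')"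
      by (simp add: Pm_def sum_distrib_left mult_ac)
    also have "\<dots> = (\<Sum>k'<R. \<Sum>l<R. Minv k l * Phi (p l) k' * Phi c k')"
      by (rule sum.swap)
    also have "\<dots> = (\<Sum>k'<R. (\<Sum>l<R. Minv k l * Phi (p l) k') * Phi c k')"
      by (simp add: sum_distrib_right)
    also have "\<dots> = (\<Sum>k'<R. if k = k' then Phi c k' else 0)"
      using k by (intro sum.cong refl) (simp add: Minv_left')
    also have "\<dots> = Phi c k" using k by simp
    finally show ?thesis .
  qed
  have "(\<Sum>b<NN. Pob a b * Pm b c) = (\<Sum>k<R. Phi a k * (\<Sum>l<R. Minv k l * Pm (p l) c))"
    by (rule Pob_apply)
  also have "\<dots> = (\<Sum>k<R. Phi a k * Phi c k)"
    by (intro sum.cong refl) (simp add: inner)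
  finally show ?thesis by (simp add: Pm_def)
qed

lemma Pm_U: "a < NN \<Longrightarrow> t < NN \<Longrightarrow> (\<Sum>c<NN. Pm a c * U c t) = (if t < R then U a t else 0)"
proof -
  assume a: "a < NN" and t: "t < NN"
  have "(\<Sum>c<NN. Pm a c * U c t) = (\<Sum>c<NN. \<Sum>k<R. Phi a k * (U c k * U c t))"
    using PhiU by (auto simp: Pm_def sum_distrib_right sum_distrib_left mult_ac intro!: sum.cong)
  also have "\<dots> = (\<Sum>k<R. Phi a k * (\<Sum>c<NN. U c k * U c t))"
    by (subst sum.swap) (simp add: sum_distrib_left)
  also have "\<dots> = (\<Sum>k<R. if k = t then Phi a k else 0)"
    using Uorth t RN by (intro sum.cong refl) auto
  also have "\<dots> = (if t < R then U a t else 0)"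
    using PhiU a by simp
  finally show ?thesis .
qed

end

lemma uc_n: "j \<in> unfold_cols N m n \<Longrightarrow> j n = undefined"
  unfolding unfold_cols_def by (simp add: PiE_def extensional_def)

lemma uc_upd: "j \<in> unfold_cols N m n \<Longrightarrow> a < N n \<Longrightarrow> n < m \<Longrightarrow> j(n:=a) \<in> tidx N m"
  unfolding unfold_cols_def tidx_def PiE_iff extensional_def by auto

lemma tidx_uc: "i \<in> tidx N m \<Longrightarrow> i(n:=undefined) \<in> unfold_cols N m n"
  unfolding unfold_cols_def tidx_def PiE_iff extensional_def by auto

lemma tidx_split:
  assumes "n < m"
  shows "(\<Sum>i\<in>tidx N m. f i) = (\<Sum>a<N n. \<Sum>j\<in>unfold_cols N m n. f (j(n:=a)))"
proof -
  have "(\<Sum>a<N n. \<Sum>j\<in>unfold_cols N m n. f (j(n:=a))) = (\<Sum>(a,j)\<in>{..<N n} \<times> unfold_cols N m n. f (j(n:=a)))"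
    by (simp add: sum.cartesian_product)
  also have "\<dots> = (\<Sum>i\<in>tidx N m. f i)"
  proof (rule sum.reindex_bij_witness[where i="\<lambda>i. (i n, i(n:=undefined))" and j="\<lambda>(a,j). j(n:=a)"])
    fix i assume "i \<in> tidx N m"
    then show "(case (i n, i(n := undefined)) of (a, j) \<Rightarrow> j(n := a)) = i" by simp
    show "(i n, i(n := undefined)) \<in> {..<N n} \<times> unfold_cols N m n"
      using \<open>i \<in> tidx N m\<close> assms by (simp add: tidx_lt tidx_uc)
  next
    fix b assume b: "b \<in> {..<N n} \<times> unfold_cols N m n"
    obtain a j where bj: "b = (a, j)" by (cases b)
    have j: "j \<in> unfold_cols N m n" and a: "a < N n" using b bj by auto
    show "((case b of (a, j) \<Rightarrow> j(n := a)) n, (case b of (a, j) \<Rightarrow> j(n := a))(n := undefined)) = b"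
      using uc_n[OF j] bj by (simp add: fun_upd_idem)
    show "(case b of (a, j) \<Rightarrow> j(n := a)) \<in> tidx N m"
      using uc_upd[OF j a assms] bj by simp
    show "f (case b of (a, j) \<Rightarrow> j(n := a)) = (case b of (a, j) \<Rightarrow> f (j(n := a)))"
      using bj by simp
  qed
  finally show ?thesis by simp
qed

lemma sum4_swap:
  "(\<Sum>a\<in>A. \<Sum>j\<in>J. \<Sum>t\<in>T. \<Sum>t'\<in>T'. h a j t t') = (\<Sum>t\<in>T. \<Sum>t'\<in>T'. \<Sum>a\<in>A. \<Sum>j\<in>J. h a j t t')"
proof -
  have "(\<Sum>a\<in>A. \<Sum>j\<in>J. \<Sum>t\<in>T. \<Sum>t'\<in>T'. h a j t t') = (\<Sum>a\<in>A. \<Sum>t\<in>T. \<Sum>t'\<in>T'. \<Sum>j\<in>J. h a j t t')"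
    by (intro sum.cong refl) (subst sum.swap, intro sum.cong refl, rule sum.swap)
  also have "\<dots> = (\<Sum>t\<in>T. \<Sum>t'\<in>T'. \<Sum>a\<in>A. \<Sum>j\<in>J. h a j t t')"
    by (subst sum.swap, intro sum.cong refl, rule sum.swap)
  finally show ?thesis .
qed

context mctx
begin

lemma resid:
  assumes nm: "n < m" and NN: "NN = N n"
    and svd: "is_svd NN (unfold_cols N m n) (mode_unfold G n) U s"
  shows "ip N m (\<lambda>i. G i - mode_prod N n Pm G i) (\<lambda>i. G i - mode_prod N n Pm G i) = (\<Sum>t\<in>{R..<NN}. (s t)\<^sup>2)"
proof -
  let ?J = "unfold_cols N m n"
  from svd obtain V where
    Vorth: "\<forall>k<NN. \<forall>l<NN. 0 < s k \<longrightarrow> 0 < s l \<longrightarrow> (\<Sum>j\<in>?J. V k j * V l j) = (if k = l then 1 else 0)"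
    and dec: "\<forall>i<NN. \<forall>j\<in>?J. mode_unfold G n i j = (\<Sum>k<NN. U i k * s k * V k j)"
    and s0: "\<forall>k<NN. 0 \<le> s k"
    unfolding is_svd_def by blast
  have j_n: "j n = undefined" if "j \<in> ?J" for j
    using that nm by (auto simp: unfold_cols_def PiE_iff extensional_def)
  have Gv: "G (j(n:=a)) = (\<Sum>t<NN. U a t * s t * V t j)" if "j \<in> ?J" "a < NN" for a j
    using dec that by (simp add: mode_unfold_def)
  have res: "G (j(n:=a)) - mode_prod N n Pm G (j(n:=a)) = (\<Sum>t\<in>{R..<NN}. U a t * s t * V t j)"
    if j: "j \<in> ?J" and a: "a < NN" for a j
  proof -
    have "mode_prod N n Pm G (j(n:=a)) = (\<Sum>k<NN. (\<Sum>t<NN. U k t * s t * V t j) * Pm a k)"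
      unfolding mode_prod_def NN[symmetric] using Gv[OF j] by (intro sum.cong refl) simp
    also have "\<dots> = (\<Sum>t<NN. (\<Sum>k<NN. Pm a k * U k t) * s t * V t j)"
      by (simp add: sum_distrib_right sum_distrib_left mult_ac) (rule sum.swap)
    also have "\<dots> = (\<Sum>t<NN. if t < R then U a t * s t * V t j else 0)"
      using a by (intro sum.cong refl) (simp add: Pm_U)
    also have "\<dots> = (\<Sum>t<R. U a t * s t * V t j)"
    proof -
      have e: "{..<NN} \<inter> {t. t < R} = {..<R}" using RN by auto
      show ?thesis by (simp add: sum.If_cases e)
    qed
    finally have "mode_prod N n Pm G (j(n:=a)) = (\<Sum>t<R. U a t * s t * V t j)" .
    moreover have "(\<Sum>t<NN. U a t * s t * V t j) = (\<Sum>t<R. U a t * s t * V t j) + (\<Sum>t\<in>{R..<NN}. U a t * s t * V t j)"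
      using RN by (simp add: atLeast0LessThan[symmetric] sum.atLeastLessThan_concat)
    ultimately show ?thesis using Gv[OF j a] by simp
  qed
  have "ip N m (\<lambda>i. G i - mode_prod N n Pm G i) (\<lambda>i. G i - mode_prod N n Pm G i)
     = (\<Sum>a<NN. \<Sum>j\<in>?J. (\<Sum>t\<in>{R..<NN}. U a t * s t * V t j)\<^sup>2)"
    unfolding ip_def tidx_split[OF nm] NN[symmetric]
    by (intro sum.cong refl) (simp add: res power2_eq_square)
  also have "\<dots> = (\<Sum>a<NN. \<Sum>j\<in>?J. \<Sum>t\<in>{R..<NN}. \<Sum>t'\<in>{R..<NN}. (U a t * U a t') * (s t * s t') * (V t j * V t' j))"
    by (simp add: power2_eq_square sum_product mult_ac)
  also have "\<dots> = (\<Sum>j\<in>?J. \<Sum>a<NN. \<Sum>t\<in>{R..<NN}. \<Sum>t'\<in>{R..<NN}. (U a t * U a t') * (s t * s t') * (V t j * V t' j))"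
    by (rule sum.swap)
  also have "\<dots> = (\<Sum>t\<in>{R..<NN}. \<Sum>t'\<in>{R..<NN}. \<Sum>j\<in>?J. \<Sum>a<NN. (U a t * U a t') * (s t * s t') * (V t j * V t' j))"
    by (rule sum4_swap)
  also have "\<dots> = (\<Sum>t\<in>{R..<NN}. \<Sum>t'\<in>{R..<NN}. (\<Sum>a<NN. U a t * U a t') * ((s t * s t') * (\<Sum>j\<in>?J. V t j * V t' j)))"
    by (simp add: sum_distrib_left sum_distrib_right mult_ac)
  also have "\<dots> = (\<Sum>t\<in>{R..<NN}. \<Sum>t'\<in>{R..<NN}. if t = t' then (s t)\<^sup>2 else 0)"
  proof (intro sum.cong refl)
    fix t t' assume t: "t \<in> {R..<NN}" and t': "t' \<in> {R..<NN}"
    show "(\<Sum>a<NN. U a t * U a t') * ((s t * s t') * (\<Sum>j\<in>?J. V t j * V t' j)) = (if t = t' then (s t)\<^sup>2 else 0)"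
    proof (cases "t = t'")
      case True
      then show ?thesis using t Uorth Vorth s0
        by (cases "s t = 0") (auto simp: power2_eq_square order_neq_le_trans)
    next
      case False
      then show ?thesis using t t' Uorth by simp
    qed
  qed
  also have "\<dots> = (\<Sum>t\<in>{R..<NN}. (s t)\<^sup>2)" by simp
  finally show ?thesis .
qed

end

lemma ip_smul: "ip N m (\<lambda>i. k * X i) Y = k * ip N m X Y"
  by (simp add: ip_def sum_distrib_left mult_ac)

lemma ip_scale: "ip N m (\<lambda>i. k * X i) (\<lambda>i. k * X i) = k\<^sup>2 * ip N m X X"
  by (simp add: ip_def sum_distrib_left mult_ac power2_eq_square)

context mctx
begin

lemma PmPob: "(\<Sum>b<NN. Pm a b * Pob b c) = Pob a c"
proof -
  have "(\<Sum>b<NN. Pm a b * Pob b c) = (\<Sum>b<NN. \<Sum>k'<R. \<Sum>k<R. Phi a k' * ((Phi b k' * Phi b k) * (\<Sum>l<R. Minv k l * S c l)))"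
  proof -
    have pob: "Pob b c = (\<Sum>k<R. Phi b k * (\<Sum>l<R. Minv k l * S c l))" for b
      by (simp add: Pob_def oblique_proj_def sum_distrib_left mult_ac)
    show ?thesis by (simp only: pob Pm_def sum_product) (simp add: mult_ac)
  qed
  also have "\<dots> = (\<Sum>k'<R. \<Sum>b<NN. \<Sum>k<R. Phi a k' * ((Phi b k' * Phi b k) * (\<Sum>l<R. Minv k l * S c l)))"
    by (rule sum.swap)
  also have "\<dots> = (\<Sum>k'<R. Phi a k' * (\<Sum>k<R. (\<Sum>b<NN. Phi b k' * Phi b k) * (\<Sum>l<R. Minv k l * S c l)))"
    by (rule sum.cong[OF refl], rule trans[OF sum.swap]) (simp add: sum_distrib_left sum_distrib_right mult_ac)
  also have "\<dots> = (\<Sum>k'<R. Phi a k' * (\<Sum>l<R. Minv k' l * S c l))"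
    by (intro sum.cong refl) (simp add: Phi_sum)
  also have "\<dots> = Pob a c"
    by (simp add: Pob_def oblique_proj_def sum_distrib_left mult_ac)
  finally show ?thesis .
qed

lemma facts':
  shows "(\<Sum>a<NN. (\<Sum>b<NN. oblique_proj R Phi Minv S a b * x b)\<^sup>2) \<le> (spec_norm R R Minv)\<^sup>2 * (\<Sum>b<NN. (x b)\<^sup>2)"
    and "(\<Sum>b<NN. oblique_proj R Phi Minv S a b * (\<Sum>k<R. Phi b k * Phi c k)) = (\<Sum>k<R. Phi a k * Phi c k)"
    and "(\<Sum>b<NN. (\<Sum>k<R. Phi a k * Phi b k) * oblique_proj R Phi Minv S b c) = oblique_proj R Phi Minv S a c"
    and "(\<Sum>b<NN. (\<Sum>k<R. Phi a k * Phi b k) * (\<Sum>k<R. Phi b k * Phi c k)) = (\<Sum>k<R. Phi a k * Phi c k)"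
  using Pob_bound[of x] PobPm[of a c] PmPob[of a c] Pm_idem[of a c] by (simp_all add: Pob_def Pm_def)

end

theorem theorem1:
  fixes d T :: nat
    and N :: "nat \<Rightarrow> nat"
    and G :: "(nat \<Rightarrow> nat) \<Rightarrow> real"
    and r :: "nat \<Rightarrow> nat"
    and U Phi S Minv :: "nat \<Rightarrow> nat \<Rightarrow> nat \<Rightarrow> real"
    and s :: "nat \<Rightarrow> nat \<Rightarrow> real"
    and p :: "nat \<Rightarrow> nat \<Rightarrow> nat"
  assumes d_pos: "1 \<le> d"
    and T_dim: "N d = T"
    and ranks: "\<forall>n<d. 1 \<le> r n \<and> r n < N n"
    and svd: "\<forall>n<d. is_svd (N n) (unfold_cols N (Suc d) n) (mode_unfold G n) (U n) (s n)"
    and Phi_def: "\<forall>n<d. \<forall>i<N n. \<forall>k<r n. Phi n i k = U n i k"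
    and perm: "\<forall>n<d. bij_betw (p n) {..<N n} {..<N n}"
    and pivQR: "\<forall>n<d. \<exists>Q R :: nat \<Rightarrow> nat \<Rightarrow> real.
                 (\<forall>k<r n. \<forall>l<r n. (\<Sum>m<r n. Q m k * Q m l) = (if k = l then 1 else 0)) \<and>
                 (\<forall>k<r n. \<forall>j<N n. j < k \<longrightarrow> R k j = 0) \<and>
                 (\<forall>k<r n. \<forall>j<N n.
                    (\<Sum>i<N n. Phi n i k * (if i = p n j then 1 else 0)) = (\<Sum>l<r n. Q k l * R l j))"
    and S_def: "\<forall>n<d. \<forall>i<N n. \<forall>k<r n. S n i k = (if i = p n k then 1 else 0)"
    and Minv_left: "\<forall>n<d. \<forall>k<r n. \<forall>l<r n.
                 (\<Sum>m<r n. Minv n k m * (\<Sum>i<N n. S n i m * Phi n i l)) = (if k = l then 1 else 0)"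
    and Minv_right: "\<forall>n<d. \<forall>k<r n. \<forall>l<r n.
                 (\<Sum>m<r n. (\<Sum>i<N n. S n i k * Phi n i m) * Minv n m l) = (if k = l then 1 else 0)"
  shows "frob N (Suc d)
           (\<lambda>i. G i - multi_mode_prod N (\<lambda>n. oblique_proj (r n) (Phi n) (Minv n) (S n)) d G i)
         \<le> (\<Prod>n<d. spec_norm (r n) (r n) (Minv n))
           * sqrt (\<Sum>n<d. \<Sum>k\<in>{r n..<N n}. (s n k)\<^sup>2)"
proof -
  define m where "m = Suc d"
  define I where "I = tidx N m"
  define PiF where "PiF n = oblique_proj (r n) (Phi n) (Minv n) (S n)" for n
  define PmF where "PmF n a b = (\<Sum>k<r n. Phi n a k * Phi n b k)" for n a b
  define eta where "eta n = spec_norm (r n) (r n) (Minv n)" for n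
  define C where "C = (\<Prod>n<d. eta n)"
  define L where "L X = multi_mode_prod N PiF d X" for X
  define Q where "Q X = multi_mode_prod N PmF d X" for X
  define tails where "tails = (\<Sum>n<d. \<Sum>k\<in>{r n..<N n}. (s n k)\<^sup>2)"
  have dm: "d \<le> m" by (simp add: m_def)
  have mc: "mctx (N n) (r n) (U n) (Phi n) (S n) (Minv n) (p n)" if n: "n < d" for n
  proof
    show "1 \<le> r n" "r n < N n" using ranks n by auto
    show "\<forall>k<N n. \<forall>k'<N n. (\<Sum>i<N n. U n i k * U n i k') = (if k = k' then 1 else 0)"
      using svd n unfolding is_svd_def by blast
  qed (use Phi_def perm S_def Minv_left n in auto)
  have Npos: "\<forall>n<d. 0 < N n" using ranks by fastforce
  have Psym: "\<And>n a b. PmF n a b = PmF n b a" by (simp add: PmF_def mult.commute)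
  have Pidem: "\<forall>n<k. \<forall>a<N n. \<forall>c<N n. (\<Sum>b<N n. PmF n a b * PmF n b c) = PmF n a c" if "k \<le> d" for k
    using mctx.facts'(4)[OF mc] that unfolding PmF_def by auto
  have Qidem: "\<forall>i\<in>I. Q (Q X) i = Q X i" for X
    unfolding Q_def I_def by (rule proj_idem[OF dm Pidem[OF order_refl]])
  have LQ: "\<forall>i\<in>I. L (Q X) i = Q X i" for X
    unfolding L_def Q_def I_def multi_comp
    by (rule multi_cong[OF dm]) (use mctx.facts'(2)[OF mc] in \<open>auto simp: PiF_def PmF_def\<close>)
  have QL: "\<forall>i\<in>I. Q (L X) i = L X i" for X
    unfolding L_def Q_def I_def multi_comp
    by (rule multi_cong[OF dm]) (use mctx.facts'(3)[OF mc] in \<open>auto simp: PiF_def PmF_def\<close>)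
  have LL: "\<forall>i\<in>I. L (L X) i = L X i" for X
  proof
    fix i assume i: "i \<in> I"
    have "\<forall>i\<in>tidx N m. L X i = Q (L X) i" using QL by (auto simp: I_def)
    then have "\<forall>i\<in>tidx N m. multi_mode_prod N PiF d (L X) i = multi_mode_prod N PiF d (Q (L X)) i"
      by (rule multi_cong[OF dm]) auto
    then have "L (L X) i = L (Q (L X)) i"
      using i by (simp only: L_def[of "L X"] L_def[of "Q (L X)"] I_def)
    also have "\<dots> = Q (L X) i" using LQ i by auto
    also have "\<dots> = L X i" using QL i by auto
    finally show "L (L X) i = L X i" .
  qed
  have eta1: "\<forall>n<d. 1 \<le> eta n" unfolding eta_def using mctx.eta_ge1[OF mc] by auto
  have C1: "1 \<le> C" unfolding C_def by (rule prod_ge_1) (use eta1 in auto)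
  have Lbound: "ip N m (L X) (L X) \<le> C\<^sup>2 * ip N m X X" for X
  proof -
    have "ip N m (L X) (L X) \<le> (\<Prod>n<d. (eta n)\<^sup>2) * ip N m X X"
      unfolding L_def
      by (rule multi_bound[OF dm Npos]) (use mctx.facts'(1)[OF mc] in \<open>auto simp: PiF_def eta_def\<close>)
    then show ?thesis by (simp add: C_def prod_power_distrib)
  qed
  define Y where "Y i = G i - Q G i" for i
  have orth: "ip N m Y (L Z) = 0" for Z
  proof -
    have "ip N m Y (L Z) = ip N m Y (Q (L Z))"
      by (rule ip_cong) (use QL in \<open>auto simp: I_def\<close>)
    also have "\<dots> = 0"
      unfolding Y_def Q_def by (rule proj_orth[OF dm Pidem[OF order_refl] Psym])
    finally show ?thesis .
  qed
  have LG: "\<forall>i\<in>I. G i - L G i = Y i - L Y i"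
  proof
    fix i assume i: "i \<in> I"
    have "G = (\<lambda>i. 1 * Y i + 1 * Q G i)" by (rule ext) (simp add: Y_def)
    then have "L G = L (\<lambda>i. 1 * Y i + 1 * Q G i)" by (rule arg_cong)
    also have "\<dots> = (\<lambda>i. 1 * L Y i + 1 * L (Q G) i)"
      unfolding L_def by (rule multi_lin)
    finally have "L G = (\<lambda>i. 1 * L Y i + 1 * L (Q G) i)" .
    then show "G i - L G i = Y i - L Y i" using LQ i by (simp add: Y_def)
  qed
  have stepD: "ip N m (\<lambda>i. Y i - L Y i) (\<lambda>i. Y i - L Y i) \<le> C\<^sup>2 * ip N m Y Y"
  proof -
    define v where "v = L Y"
    define a where "a = ip N m Y Y"
    define b where "b = ip N m v v"
    have a0: "0 \<le> a" unfolding a_def by (rule ip_nonneg)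
    have b0: "0 \<le> b" unfolding b_def by (rule ip_nonneg)
    have Yv: "ip N m Y v = 0" unfolding v_def by (rule orth)
    have e: "ip N m (\<lambda>i. Y i - L Y i) (\<lambda>i. Y i - L Y i) = a + b"
      using nrm_diff[of N m Y v] Yv by (simp add: a_def b_def v_def)
    have C2: "1 \<le> C\<^sup>2" using C1 by (simp add: one_le_power)
    show ?thesis
    proof (cases "b = 0")
      case True
      then show ?thesis using e a0 C2 by (simp add: a_def) (metis mult_le_cancel_right1 order_trans True add_0_right order_refl mult_right_mono)
    next
      case False
      then have bp: "0 < b" using b0 by simp
      define c where "c = a / b"
      define x where "x i = c * v i + 1 * Y i" for i
      have Lx: "L x = (\<lambda>i. c * L v i + 1 * L Y i)" unfolding L_def x_def by (rule multi_lin)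
      have "ip N m (L x) (L x) = ip N m (\<lambda>i. (c + 1) * v i) (\<lambda>i. (c + 1) * v i)"
        by (rule ip_cong) (use LL in \<open>auto simp: Lx v_def I_def algebra_simps\<close>)
      also have "\<dots> = (c + 1)\<^sup>2 * b" by (simp add: ip_scale b_def)
      finally have h1: "ip N m (L x) (L x) = (c + 1)\<^sup>2 * b" .
      have "ip N m x x = ip N m (\<lambda>i. c * v i) (\<lambda>i. c * v i) + 2 * ip N m (\<lambda>i. c * v i) Y + ip N m Y Y"
      proof -
        have xe: "x = (\<lambda>i. c * v i + Y i)" by (rule ext) (simp add: x_def)
        show ?thesis using nrm_add[of N m "\<lambda>i. c * v i" Y] by (simp only: xe)
      qed
      also have "\<dots> = c\<^sup>2 * b + a"
        using Yv by (simp add: ip_scale ip_smul ip_sym[of N m v Y] a_def b_def)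
      finally have h2: "ip N m x x = c\<^sup>2 * b + a" .
      have "(c + 1)\<^sup>2 * b \<le> C\<^sup>2 * (c\<^sup>2 * b + a)" using Lbound[of x] h1 h2 by simp
      moreover have "(c + 1)\<^sup>2 * b = (a + b)\<^sup>2 / b" using bp
        by (simp add: c_def field_simps power2_eq_square)
      moreover have "c\<^sup>2 * b + a = a * (a + b) / b" using bp
        by (simp add: c_def field_simps power2_eq_square)
      ultimately have "(a + b)\<^sup>2 / b \<le> C\<^sup>2 * (a * (a + b) / b)" by simp
      then have "(a + b)\<^sup>2 \<le> C\<^sup>2 * a * (a + b)" using bp
        by (simp add: divide_le_eq mult.assoc)
      then have "(a + b) * (a + b) \<le> (C\<^sup>2 * a) * (a + b)" by (simp add: power2_eq_square mult_ac)
      then have "a + b \<le> C\<^sup>2 * a" using bp a0 by (simp add: mult_le_cancel_right)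
      then show ?thesis using e by (simp add: a_def)
    qed
  qed
  have stepE: "ip N m (\<lambda>i. G i - multi_mode_prod N PmF k G i) (\<lambda>i. G i - multi_mode_prod N PmF k G i)
      \<le> (\<Sum>n<k. ip N m (\<lambda>i. G i - mode_prod N n (PmF n) G i) (\<lambda>i. G i - mode_prod N n (PmF n) G i))"
    if "k \<le> d" for k
    using that
  proof (induction k)
    case 0 then show ?case by (simp add: ip_def)
  next
    case (Suc k)
    have km: "k \<le> m" and kd: "k \<le> d" using Suc.prems by (auto simp: m_def)
    let ?Qk = "multi_mode_prod N PmF k"
    define W where "W i = G i - ?Qk G i" for i
    define Z where "Z i = G i - mode_prod N k (PmF k) G i" for i
    have "?Qk Z = (\<lambda>i. 1 * ?Qk G i + (-1) * ?Qk (mode_prod N k (PmF k) G) i)"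
    proof -
      have "Z = (\<lambda>i. 1 * G i + (-1) * mode_prod N k (PmF k) G i)" by (rule ext) (simp add: Z_def)
      then show ?thesis by (simp only: multi_lin)
    qed
    then have eq: "(\<lambda>i. G i - multi_mode_prod N PmF (Suc k) G i) = (\<lambda>i. W i + ?Qk Z i)"
      by (auto simp: W_def multi_comm)
    have o: "ip N m W (?Qk Z) = 0"
      unfolding W_def by (rule proj_orth[OF km Pidem[OF kd] Psym])
    have c: "ip N m (?Qk Z) (?Qk Z) \<le> ip N m Z Z"
      by (rule proj_contract[OF km Pidem[OF kd] Psym])
    have "ip N m (\<lambda>i. G i - multi_mode_prod N PmF (Suc k) G i) (\<lambda>i. G i - multi_mode_prod N PmF (Suc k) G i)
        = ip N m W W + 2 * ip N m W (?Qk Z) + ip N m (?Qk Z) (?Qk Z)"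
      unfolding eq by (rule nrm_add)
    also have "\<dots> \<le> ip N m W W + ip N m Z Z" using o c by simp
    also have "\<dots> \<le> (\<Sum>n<Suc k. ip N m (\<lambda>i. G i - mode_prod N n (PmF n) G i) (\<lambda>i. G i - mode_prod N n (PmF n) G i))"
    proof -
      have We: "W = (\<lambda>i. G i - ?Qk G i)" by (rule ext) (simp add: W_def)
      have Ze: "Z = (\<lambda>i. G i - mode_prod N k (PmF k) G i)" by (rule ext) (simp add: Z_def)
      show ?thesis using Suc.IH Suc.prems by (simp add: We Ze)
    qed
    finally show ?case .
  qed
  have tailsn: "ip N m (\<lambda>i. G i - mode_prod N n (PmF n) G i) (\<lambda>i. G i - mode_prod N n (PmF n) G i)
      = (\<Sum>k\<in>{r n..<N n}. (s n k)\<^sup>2)" if n: "n < d" for n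
  proof -
    have "PmF n = mctx.Pm (r n) (Phi n)" 
      by (auto simp: PmF_def mctx.Pm_def[OF mc[OF n]] intro!: ext)
    then show ?thesis
      using mctx.resid[OF mc[OF n], where n=n and m=m and N=N and G=G and s="s n"] svd n by (simp add: m_def)
  qed
  have YY: "ip N m Y Y \<le> tails"
    using stepE[OF order_refl] tailsn unfolding tails_def Y_def Q_def by simp
  have "frob N (Suc d) (\<lambda>i. G i - multi_mode_prod N (\<lambda>n. oblique_proj (r n) (Phi n) (Minv n) (S n)) d G i)
      = sqrt (ip N m (\<lambda>i. G i - L G i) (\<lambda>i. G i - L G i))"
  proof -
    have PiFe: "PiF = (\<lambda>n. oblique_proj (r n) (Phi n) (Minv n) (S n))" by (rule ext) (simp add: PiF_def)
    show ?thesis by (simp add: frob_def ip_def m_def L_def PiFe power2_eq_square)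
  qed
  also have "\<dots> = sqrt (ip N m (\<lambda>i. Y i - L Y i) (\<lambda>i. Y i - L Y i))"
    using LG by (simp add: ip_cong I_def)
  also have "\<dots> \<le> sqrt (C\<^sup>2 * tails)"
    using stepD YY by (meson mult_left_mono order_trans real_sqrt_le_mono zero_le_power2)
  also have "\<dots> = C * sqrt tails"
    using C1 by (simp add: real_sqrt_mult)
  finally show ?thesis by (simp add: C_def eta_def tails_def)
qed

end
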